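(* Let $(X,Y)$ be a splitting of a finite Weyl group $W$, and let $x_0\in X$ and $y_0\in Y$ be the unique maximal elements of $X$ in left weak order and of $Y$ in right weak order respectively (so that $x_0y_0=w_0$). Define $\varphi,\psi:W\to W$ by $\varphi(u)=ux_0^{-1}$ and $\psi(u)=w_0y_0^{-1}uw_0=x_0uw_0$. Then $(\varphi(X),\psi(Y))$ is also a splitting of $W$, and its left-maximal and right-maximal elements are $x_0^{-1}$ and $x_0w_0=w_0y_0^{-1}w_0$ respectively.
   Context: $W$ is the Weyl group of a finite crystallographic root system, with Coxeter length $\ell$ and longest element $w_0$. Left weak order: $v\leq_L w$ iff $w=zv$ with $\ell(w)=\ell(z)+\ell(v)$; right weak order: $v\leq_R w$ iff $w=vz$ with $\ell(w)=\ell(v)+\ell(z)$. A pair $(X,Y)$ of subsets of $W$ is a splitting of $W$ if the map $X\times Y\to W$, $(x,y)\mapsto xy$, is a bijection with $\ell(xy)=\ell(x)+\ell(y)$ for all $x\in X,y\in Y$. For any splitting, $X$ has a unique maximal element in left weak order and $Y$ has a unique maximal element in right weak order, and their product is $w_0$. *)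

theory Defs
  imports "HOL-Analysis.Analysis"
begin

definition root_refl :: "'a::euclidean_space \<Rightarrow> 'a \<Rightarrow> 'a" where
  "root_refl \<alpha> v = v - (2 * (v \<bullet> \<alpha>) / (\<alpha> \<bullet> \<alpha>)) *\<^sub>R \<alpha>"

definition crystallographic_root_system :: "'a::euclidean_space set \<Rightarrow> bool" where
  "crystallographic_root_system R \<longleftrightarrow>
     finite R \<and> 0 \<notin> R \<and>
     (\<forall>\<alpha>\<in>R. root_refl \<alpha> ` R \<subseteq> R) \<and>
     (\<forall>\<alpha>\<in>R. \<forall>\<beta>\<in>R. 2 * (\<beta> \<bullet> \<alpha>) / (\<alpha> \<bullet> \<alpha>) \<in> \<int>) \<and>
     (\<forall>\<alpha>\<in>R. \<forall>c::real. c *\<^sub>R \<alpha> \<in> R \<longrightarrow> c = 1 \<or> c = -1)"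

inductive_set weyl_group :: "'a::euclidean_space set \<Rightarrow> ('a \<Rightarrow> 'a) set" for R where
  weyl_id: "id \<in> weyl_group R"
| weyl_step: "\<alpha> \<in> R \<Longrightarrow> w \<in> weyl_group R \<Longrightarrow> root_refl \<alpha> \<circ> w \<in> weyl_group R"

text \<open>A positive system is cut out by a vector c that is not orthogonal to any root.\<close>
definition generic_vector :: "'a::euclidean_space set \<Rightarrow> 'a \<Rightarrow> bool" where
  "generic_vector R c \<longleftrightarrow> (\<forall>\<alpha>\<in>R. c \<bullet> \<alpha> \<noteq> 0)"

definition positive_roots :: "'a::euclidean_space set \<Rightarrow> 'a \<Rightarrow> 'a set" where
  "positive_roots R c = {\<alpha>\<in>R. c \<bullet> \<alpha> > 0}"

definition simple_roots :: "'a::euclidean_space set \<Rightarrow> 'a \<Rightarrow> 'a set" where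
  "simple_roots R c = {\<alpha>\<in>positive_roots R c.
      \<not> (\<exists>\<beta>\<in>positive_roots R c. \<exists>\<gamma>\<in>positive_roots R c. \<alpha> = \<beta> + \<gamma>)}"

definition coxeter_length :: "'a::euclidean_space set \<Rightarrow> 'a \<Rightarrow> ('a \<Rightarrow> 'a) \<Rightarrow> nat" where
  "coxeter_length R c w = (LEAST n. \<exists>ss. length ss = n \<and> set ss \<subseteq> simple_roots R c \<and>
       w = foldr (\<lambda>\<alpha> f. root_refl \<alpha> \<circ> f) ss id)"

definition longest_element :: "'a::euclidean_space set \<Rightarrow> 'a \<Rightarrow> ('a \<Rightarrow> 'a)" where
  "longest_element R c = (THE w0. w0 \<in> weyl_group R \<and>
      (\<forall>w\<in>weyl_group R. coxeter_length R c w \<le> coxeter_length R c w0))"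

definition left_weak_le :: "'a::euclidean_space set \<Rightarrow> 'a \<Rightarrow> ('a \<Rightarrow> 'a) \<Rightarrow> ('a \<Rightarrow> 'a) \<Rightarrow> bool" where
  "left_weak_le R c v w \<longleftrightarrow> (\<exists>z\<in>weyl_group R. w = z \<circ> v \<and>
      coxeter_length R c w = coxeter_length R c z + coxeter_length R c v)"

definition right_weak_le :: "'a::euclidean_space set \<Rightarrow> 'a \<Rightarrow> ('a \<Rightarrow> 'a) \<Rightarrow> ('a \<Rightarrow> 'a) \<Rightarrow> bool" where
  "right_weak_le R c v w \<longleftrightarrow> (\<exists>z\<in>weyl_group R. w = v \<circ> z \<and>
      coxeter_length R c w = coxeter_length R c v + coxeter_length R c z)"

definition splitting :: "'a::euclidean_space set \<Rightarrow> 'a \<Rightarrow> ('a \<Rightarrow> 'a) set \<Rightarrow> ('a \<Rightarrow> 'a) set \<Rightarrow> bool" where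
  "splitting R c X Y \<longleftrightarrow> X \<subseteq> weyl_group R \<and> Y \<subseteq> weyl_group R \<and>
      bij_betw (\<lambda>(x, y). x \<circ> y) (X \<times> Y) (weyl_group R) \<and>
      (\<forall>x\<in>X. \<forall>y\<in>Y. coxeter_length R c (x \<circ> y) = coxeter_length R c x + coxeter_length R c y)"

end

theory Submission
  imports Defs
begin


lemma refl_self: "(\<alpha>::'a::euclidean_space) \<noteq> 0 \<Longrightarrow> root_refl \<alpha> \<alpha> = - \<alpha>"
  by (simp add: root_refl_def algebra_simps) (metis scaleR_2 )

lemma refl_invol: "(\<alpha>::'a::euclidean_space) \<noteq> 0 \<Longrightarrow> root_refl \<alpha> (root_refl \<alpha> v) = v"
  by (simp add: root_refl_def inner_diff_left algebra_simps)

lemma refl_comp: "(\<alpha>::'a::euclidean_space) \<noteq> 0 \<Longrightarrow> root_refl \<alpha> \<circ> root_refl \<alpha> = id"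
  by (simp add: fun_eq_iff refl_invol)

lemma refl_linear: "linear (root_refl (\<alpha>::'a::euclidean_space))"
  by (rule linearI) (simp_all add: root_refl_def inner_add_left algebra_simps scaleR_add_left add_divide_distrib)

lemma refl_inner: "(\<alpha>::'a::euclidean_space) \<noteq> 0 \<Longrightarrow> root_refl \<alpha> x \<bullet> root_refl \<alpha> y = x \<bullet> y"
  by (simp add: root_refl_def inner_diff_left inner_diff_right algebra_simps inner_commute)

lemma refl_neg: "root_refl (- (\<alpha>::'a::euclidean_space)) = root_refl \<alpha>"
  by (simp add: fun_eq_iff root_refl_def)

lemma refl_conj:
  fixes u :: "'a::euclidean_space \<Rightarrow> 'a"
  assumes "linear u" "\<And>x y. u x \<bullet> u y = x \<bullet> y"
  shows "root_refl (u \<alpha>) \<circ> u = u \<circ> root_refl \<alpha>"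
proof
  fix x
  have "root_refl (u \<alpha>) (u x) = u x - (2 * (x \<bullet> \<alpha>) / (\<alpha> \<bullet> \<alpha>)) *\<^sub>R u \<alpha>"
    by (simp add: root_refl_def assms(2))
  also have "\<dots> = u (root_refl \<alpha> x)"
    by (simp add: root_refl_def linear_diff[OF assms(1)] linear_cmul[OF assms(1)])
  finally show "(root_refl (u \<alpha>) \<circ> u) x = (u \<circ> root_refl \<alpha>) x" by simp
qed


inductive_set nnsum :: "'a::euclidean_space set \<Rightarrow> 'a set" for S where
  nn0: "0 \<in> nnsum S"
| nnS: "\<gamma> \<in> S \<Longrightarrow> v \<in> nnsum S \<Longrightarrow> \<gamma> + v \<in> nnsum S"

lemma nnsum_add: "u \<in> nnsum S \<Longrightarrow> v \<in> nnsum S \<Longrightarrow> u + v \<in> nnsum S"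
  by (induction u rule: nnsum.induct) (auto simp: add.assoc intro: nnsum.intros)

lemma nnsum_pos: "v \<in> nnsum S \<Longrightarrow> (\<And>\<gamma>. \<gamma> \<in> S \<Longrightarrow> c \<bullet> \<gamma> > 0) \<Longrightarrow> v = 0 \<or> c \<bullet> v > 0"
  by (induction v rule: nnsum.induct) (auto simp: inner_add_right add_pos_pos)

lemma nnsum_nonpos: "v \<in> nnsum S \<Longrightarrow> (\<And>\<gamma>. \<gamma> \<in> S \<Longrightarrow> a \<bullet> \<gamma> \<le> 0) \<Longrightarrow> a \<bullet> v \<le> 0"
  by (induction v rule: nnsum.induct) (auto simp: inner_add_right add_nonpos_nonpos)

lemma nnsum_neg_map: "v \<in> nnsum S \<Longrightarrow> linear w \<Longrightarrow> (\<And>\<gamma>. \<gamma> \<in> S \<Longrightarrow> c \<bullet> w \<gamma> < 0) \<Longrightarrow> v = 0 \<or> c \<bullet> w v < 0"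
  by (induction v rule: nnsum.induct) (auto simp: inner_add_right linear_add linear_0, metis add_neg_neg)

lemma nnsum_split: "v \<in> nnsum S \<Longrightarrow> \<exists>n::nat. \<exists>v'. v = of_nat n *\<^sub>R \<alpha> + v' \<and> v' \<in> nnsum (S - {\<alpha>})"
proof (induction v rule: nnsum.induct)
  case nn0 then show ?case by (intro exI[of _ 0] exI[of _ 0]) (auto intro: nnsum.intros)
next
  case (nnS \<gamma> v)
  then obtain n v' where v: "v = of_nat n *\<^sub>R \<alpha> + v'" "v' \<in> nnsum (S - {\<alpha>})" by blast
  show ?case
  proof (cases "\<gamma> = \<alpha>")
    case True
    then show ?thesis using v by (intro exI[of _ "Suc n"] exI[of _ v']) (auto simp: algebra_simps)
  next
    case False
    then show ?thesis using v nnS by (intro exI[of _ n] exI[of _ "\<gamma> + v'"]) (auto simp: algebra_simps intro: nnsum.intros)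
  qed
qed

locale rs =
  fixes R :: "'a::euclidean_space set" and c :: 'a
  assumes crs: "crystallographic_root_system R" and gen: "generic_vector R c"
begin

abbreviation "Pos \<equiv> positive_roots R c"
abbreviation "Sim \<equiv> simple_roots R c"
abbreviation "len \<equiv> coxeter_length R c"

definition wd :: "'a list \<Rightarrow> 'a \<Rightarrow> 'a" where "wd ss = foldr (\<lambda>\<alpha> f. root_refl \<alpha> \<circ> f) ss id"
definition invs where "invs w = {\<beta>\<in>Pos. c \<bullet> w \<beta> < 0}"
definition ninv where "ninv w = card (invs w)"

lemma finR: "finite R" using crs by (simp add: crystallographic_root_system_def)
lemma nz: "\<alpha> \<in> R \<Longrightarrow> \<alpha> \<noteq> 0" using crs by (auto simp: crystallographic_root_system_def)
lemma reflR: "\<alpha> \<in> R \<Longrightarrow> \<beta> \<in> R \<Longrightarrow> root_refl \<alpha> \<beta> \<in> R"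
  using crs by (auto simp: crystallographic_root_system_def)
lemma integ: "\<alpha> \<in> R \<Longrightarrow> \<beta> \<in> R \<Longrightarrow> 2 * (\<beta> \<bullet> \<alpha>) / (\<alpha> \<bullet> \<alpha>) \<in> \<int>"
  using crs by (auto simp: crystallographic_root_system_def)
lemma reduced: "\<alpha> \<in> R \<Longrightarrow> t *\<^sub>R \<alpha> \<in> R \<Longrightarrow> t = 1 \<or> t = -1"
  using crs by (auto simp: crystallographic_root_system_def)
lemma negR: "\<alpha> \<in> R \<Longrightarrow> - \<alpha> \<in> R"
  using reflR[of \<alpha> \<alpha>] refl_self[OF nz] by simp
lemma genR: "\<beta> \<in> R \<Longrightarrow> c \<bullet> \<beta> \<noteq> 0" using gen by (auto simp: generic_vector_def)
lemma Pos_iff: "\<beta> \<in> Pos \<longleftrightarrow> \<beta> \<in> R \<and> c \<bullet> \<beta> > 0" by (simp add: positive_roots_def)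
lemma Sim_Pos: "\<alpha> \<in> Sim \<Longrightarrow> \<alpha> \<in> Pos" by (simp add: simple_roots_def)
lemma Sim_R: "\<alpha> \<in> Sim \<Longrightarrow> \<alpha> \<in> R" by (simp add: simple_roots_def Pos_iff)
lemma finPos: "finite Pos" using finR by (simp add: positive_roots_def)
lemma R_cases: "\<beta> \<in> R \<Longrightarrow> \<beta> \<in> Pos \<or> - \<beta> \<in> Pos"
  using genR negR by (force simp: Pos_iff)

lemma pos_induct[consumes 1, case_names step]:
  assumes "\<beta> \<in> Pos" and step: "\<And>\<beta>. \<beta> \<in> Pos \<Longrightarrow> (\<And>\<gamma>. \<gamma> \<in> Pos \<Longrightarrow> c \<bullet> \<gamma> < c \<bullet> \<beta> \<Longrightarrow> P \<gamma>) \<Longrightarrow> P \<beta>"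
  shows "P \<beta>"
proof -
  have "\<forall>\<beta>\<in>Pos. card {\<gamma>\<in>R. c \<bullet> \<gamma> < c \<bullet> \<beta>} = n \<longrightarrow> P \<beta>" for n
  proof (induction n rule: less_induct)
    case (less n)
    show ?case
    proof (intro ballI impI)
      fix \<beta> assume b: "\<beta> \<in> Pos" "card {\<gamma>\<in>R. c \<bullet> \<gamma> < c \<bullet> \<beta>} = n"
      show "P \<beta>"
      proof (rule step[OF b(1)])
        fix \<gamma> assume g: "\<gamma> \<in> Pos" "c \<bullet> \<gamma> < c \<bullet> \<beta>"
        have "{\<gamma>'\<in>R. c \<bullet> \<gamma>' < c \<bullet> \<gamma>} \<subset> {\<gamma>\<in>R. c \<bullet> \<gamma> < c \<bullet> \<beta>}"
          using g by (auto simp: Pos_iff)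
        then have "card {\<gamma>'\<in>R. c \<bullet> \<gamma>' < c \<bullet> \<gamma>} < n"
          using b(2) finR by (metis (no_types, lifting) finite_subset mem_Collect_eq psubset_card_mono subsetI)
        then show "P \<gamma>" using less g(1) by blast
      qed
    qed
  qed
  then show "P \<beta>" using assms(1) by blast
qed

lemma Pos_nnsum: "\<beta> \<in> Pos \<Longrightarrow> \<beta> \<in> nnsum Sim"
proof (induction \<beta> rule: pos_induct)
  case (step \<beta>)
  show ?case
  proof (cases "\<beta> \<in> Sim")
    case True
    then show ?thesis using nnsum.nnS[OF True nnsum.nn0] by simp
  next
    case False
    then obtain b1 b2 where bb: "b1 \<in> Pos" "b2 \<in> Pos" "\<beta> = b1 + b2"
      using step(1) by (auto simp: simple_roots_def)
    have "c \<bullet> b1 < c \<bullet> \<beta>" "c \<bullet> b2 < c \<bullet> \<beta>" using bb by (auto simp: Pos_iff inner_add_right)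
    then show ?thesis using step(2) bb nnsum_add by metis
  qed
qed

end


context rs begin

lemma refl_R_eq: "\<alpha> \<in> R \<Longrightarrow> root_refl \<alpha> ` R = R"
proof
  assume a: "\<alpha> \<in> R"
  show "root_refl \<alpha> ` R \<subseteq> R" using reflR[OF a] by auto
  show "R \<subseteq> root_refl \<alpha> ` R"
  proof
    fix \<beta> assume "\<beta> \<in> R"
    then show "\<beta> \<in> root_refl \<alpha> ` R"
      using reflR[OF a] refl_invol[OF nz[OF a], of \<beta>] by (metis image_eqI)
  qed
qed

lemma W_props_all: "w \<in> weyl_group R \<Longrightarrow> linear w \<and> (\<forall>x y. w x \<bullet> w y = x \<bullet> y) \<and> w ` R = R \<and> bij w"
proof (induction w rule: weyl_group.induct)
  case weyl_id
  then show ?case using linear_id bij_id by (simp add: id_def)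
next
  case (weyl_step \<alpha> w)
  have "linear (root_refl \<alpha> \<circ> w)" using weyl_step refl_linear linear_compose by blast
  moreover have "\<forall>x y. (root_refl \<alpha> \<circ> w) x \<bullet> (root_refl \<alpha> \<circ> w) y = x \<bullet> y"
    using weyl_step refl_inner[OF nz] by simp
  moreover have "(root_refl \<alpha> \<circ> w) ` R = R" using weyl_step.IH weyl_step.hyps(1) refl_R_eq image_comp by metis
  moreover have "bij (root_refl \<alpha> \<circ> w)"
    using weyl_step involuntory_imp_bij[of "root_refl \<alpha>"] refl_invol[OF nz] bij_comp by blast
  ultimately show ?case by blast
qed

lemma W_linear: "w \<in> weyl_group R \<Longrightarrow> linear w" using W_props_all by blast
lemma W_inner: "w \<in> weyl_group R \<Longrightarrow> w x \<bullet> w y = x \<bullet> y" using W_props_all by blast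
lemma W_R: "w \<in> weyl_group R \<Longrightarrow> w ` R = R" using W_props_all by blast
lemma W_RI: "w \<in> weyl_group R \<Longrightarrow> \<beta> \<in> R \<Longrightarrow> w \<beta> \<in> R" using W_R by blast
lemma W_bij: "w \<in> weyl_group R \<Longrightarrow> bij w" using W_props_all by blast

lemma sim_nodecomp: "\<alpha> \<in> Sim \<Longrightarrow> b \<in> Pos \<Longrightarrow> g \<in> Pos \<Longrightarrow> \<alpha> \<noteq> b + g"
  unfolding simple_roots_def by blast

lemma sim_pair: assumes "\<alpha> \<in> Sim" "\<beta> \<in> Sim" "\<alpha> \<noteq> \<beta>" shows "\<alpha> \<bullet> \<beta> \<le> 0"
proof (rule ccontr)
  assume "\<not> \<alpha> \<bullet> \<beta> \<le> 0"
  then have p: "\<alpha> \<bullet> \<beta> > 0" by simp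
  have aR: "\<alpha> \<in> R" and bR: "\<beta> \<in> R" using assms Sim_R by auto
  have aa: "\<alpha> \<bullet> \<alpha> > 0" and bb: "\<beta> \<bullet> \<beta> > 0" using nz[OF aR] nz[OF bR] by auto
  obtain ia where ia: "2 * (\<alpha> \<bullet> \<beta>) / (\<beta> \<bullet> \<beta>) = of_int ia"
    using integ[OF bR aR] by (auto elim: Ints_cases)
  obtain ib where ib: "2 * (\<beta> \<bullet> \<alpha>) / (\<alpha> \<bullet> \<alpha>) = of_int ib"
    using integ[OF aR bR] by (auto elim: Ints_cases)
  have ia0: "ia > 0"
  proof -
    have "(0::real) < 2 * (\<alpha> \<bullet> \<beta>) / (\<beta> \<bullet> \<beta>)" using p bb by simp
    then show ?thesis using ia by simp
  qed
  have ib0: "ib > 0"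
  proof -
    have "(0::real) < 2 * (\<beta> \<bullet> \<alpha>) / (\<alpha> \<bullet> \<alpha>)" using p aa by (simp add: inner_commute)
    then show ?thesis using ib by simp
  qed
  have cs: "\<alpha> \<bullet> \<beta> < norm \<alpha> * norm \<beta>"
  proof -
    have le: "\<alpha> \<bullet> \<beta> \<le> norm \<alpha> * norm \<beta>" by (rule norm_cauchy_schwarz)
    have "\<alpha> \<bullet> \<beta> \<noteq> norm \<alpha> * norm \<beta>"
    proof
      assume "\<alpha> \<bullet> \<beta> = norm \<alpha> * norm \<beta>"
      then have e: "norm \<alpha> *\<^sub>R \<beta> = norm \<beta> *\<^sub>R \<alpha>" using norm_cauchy_schwarz_eq by blast
      have na: "norm \<alpha> > 0" "norm \<beta> > 0" using nz[OF aR] nz[OF bR] by auto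
      have "\<beta> = inverse (norm \<alpha>) *\<^sub>R (norm \<alpha> *\<^sub>R \<beta>)" using na by simp
      also have "\<dots> = (norm \<beta> / norm \<alpha>) *\<^sub>R \<alpha>" by (simp add: e divide_inverse mult.commute)
      finally have bt: "\<beta> = (norm \<beta> / norm \<alpha>) *\<^sub>R \<alpha>" .
      then have "(norm \<beta> / norm \<alpha>) *\<^sub>R \<alpha> \<in> R" using bR by simp
      from reduced[OF aR this] have "norm \<beta> / norm \<alpha> = 1 \<or> norm \<beta> / norm \<alpha> = -1" .
      moreover have "norm \<beta> / norm \<alpha> > 0" using na by simp
      ultimately have n1: "norm \<beta> / norm \<alpha> = 1" by linarith
      show False using bt n1 assms(3) by (metis scaleR_one)
    qed
    with le show ?thesis by simp
  qed
  have sq: "(\<alpha> \<bullet> \<beta>)^2 < (\<alpha> \<bullet> \<alpha>) * (\<beta> \<bullet> \<beta>)"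
  proof -
    have "(\<alpha> \<bullet> \<beta>)^2 < (norm \<alpha> * norm \<beta>)^2" using cs p by (simp add: power_strict_mono)
    also have "\<dots> = (\<alpha> \<bullet> \<alpha>) * (\<beta> \<bullet> \<beta>)" by (simp add: power_mult_distrib dot_square_norm)
    finally show ?thesis .
  qed
  have "of_int (ia * ib) = 4 * (\<alpha> \<bullet> \<beta>)^2 / ((\<alpha> \<bullet> \<alpha>) * (\<beta> \<bullet> \<beta>))"
    using ia ib aa bb by (simp add: inner_commute[of \<beta> \<alpha>] power2_eq_square field_simps flip: ia ib)
  also have "\<dots> < 4" using sq aa bb by (simp add: field_simps)
  finally have "ia * ib < 4" by linarith
  then have "ia = 1 \<or> ib = 1"
  proof -
    { assume "ia \<ge> 2" "ib \<ge> 2"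
      then have "ia * ib \<ge> 2 * 2" by (intro mult_mono) auto
      with \<open>ia * ib < 4\<close> have False by simp }
    then have "\<not> (ia \<ge> 2 \<and> ib \<ge> 2)" by blast
    then show ?thesis using ia0 ib0 by linarith
  qed
  then have d: "\<alpha> - \<beta> \<in> R"
  proof
    assume "ia = 1"
    then have "root_refl \<beta> \<alpha> = \<alpha> - \<beta>" using ia p by (simp add: root_refl_def)
    then show ?thesis using reflR[OF bR aR] by simp
  next
    assume "ib = 1"
    then have "root_refl \<alpha> \<beta> = \<beta> - \<alpha>" using ib p by (simp add: root_refl_def inner_commute)
    then show ?thesis using reflR[OF aR bR] negR by fastforce
  qed
  show False
  proof (cases "c \<bullet> (\<alpha> - \<beta>) > 0")
    case True
    then have "\<alpha> - \<beta> \<in> Pos" using d by (simp add: Pos_iff)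
    moreover have "\<beta> \<in> Pos" using assms Sim_Pos by auto
    ultimately show False using sim_nodecomp[OF assms(1), of \<beta> "\<alpha> - \<beta>"] by simp
  next
    case False
    then have "c \<bullet> (\<beta> - \<alpha>) > 0" using genR[OF d] by (simp add: inner_diff_right)
    then have "\<beta> - \<alpha> \<in> Pos" using negR[OF d] by (simp add: Pos_iff)
    moreover have "\<alpha> \<in> Pos" using assms Sim_Pos by auto
    ultimately show False using sim_nodecomp[OF assms(2), of \<alpha> "\<beta> - \<alpha>"] by simp
  qed
qed

end


context rs begin

lemma refl_pos: assumes a: "\<alpha> \<in> Sim" and b: "\<beta> \<in> Pos" and neg: "c \<bullet> root_refl \<alpha> \<beta> < 0"
  shows "\<beta> = \<alpha>"
proof (rule ccontr)
  assume ne: "\<beta> \<noteq> \<alpha>"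
  have aR: "\<alpha> \<in> R" using a Sim_R by auto
  have bR: "\<beta> \<in> R" using b by (simp add: Pos_iff)
  have ca: "c \<bullet> \<alpha> > 0" using a Sim_Pos Pos_iff by auto
  have aa: "\<alpha> \<bullet> \<alpha> > 0" using nz[OF aR] by simp
  define k where "k = 2 * (\<beta> \<bullet> \<alpha>) / (\<alpha> \<bullet> \<alpha>)"
  have rb: "root_refl \<alpha> \<beta> = \<beta> - k *\<^sub>R \<alpha>" by (simp add: root_refl_def k_def)
  have orth: "\<And>\<gamma>. \<gamma> \<in> Sim - {\<alpha>} \<Longrightarrow> \<alpha> \<bullet> \<gamma> \<le> 0" using sim_pair a by auto
  have posS: "\<And>\<gamma>. \<gamma> \<in> Sim - {\<alpha>} \<Longrightarrow> c \<bullet> \<gamma> > 0" using Sim_Pos Pos_iff by auto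
  obtain n v where nv: "\<beta> = real n *\<^sub>R \<alpha> + v" "v \<in> nnsum (Sim - {\<alpha>})"
    using nnsum_split[OF Pos_nnsum[OF b], of \<alpha>] by blast
  have v0: "v \<noteq> 0"
  proof
    assume "v = 0"
    then have "real n *\<^sub>R \<alpha> \<in> R" using nv bR by simp
    from reduced[OF aR this] have "real n = 1" by linarith
    then show False using nv \<open>v = 0\<close> ne by simp
  qed
  then have cv: "c \<bullet> v > 0" using nnsum_pos[OF nv(2) posS] by blast
  define g where "g = - root_refl \<alpha> \<beta>"
  have gP: "g \<in> Pos" using neg negR[OF reflR[OF aR bR]] by (simp add: g_def Pos_iff)
  obtain n' u where nu: "g = real n' *\<^sub>R \<alpha> + u" "u \<in> nnsum (Sim - {\<alpha>})"
    using nnsum_split[OF Pos_nnsum[OF gP], of \<alpha>] by blast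
  have cu: "c \<bullet> u \<ge> 0" using nnsum_pos[OF nu(2) posS] by auto
  define m where "m = k - real n - real n'"
  have eq: "v + u = m *\<^sub>R \<alpha>"
  proof -
    have "g = - (\<beta> - k *\<^sub>R \<alpha>)" using g_def rb by simp
    then have "real n' *\<^sub>R \<alpha> + u = k *\<^sub>R \<alpha> - (real n *\<^sub>R \<alpha> + v)" using nu nv by simp
    then show ?thesis by (simp add: m_def algebra_simps)
  qed
  have "c \<bullet> (v + u) > 0" using cv cu by (simp add: inner_add_right)
  then have "m * (c \<bullet> \<alpha>) > 0" using eq by simp
  then have m0: "m > 0" using ca by (simp add: zero_less_mult_iff)
  have "\<alpha> \<bullet> (v + u) \<le> 0" using nnsum_nonpos[OF nnsum_add[OF nv(2) nu(2)] orth] .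
  moreover have "\<alpha> \<bullet> (v + u) > 0" using eq m0 aa by simp
  ultimately show False by simp
qed

lemma refl_pos2: assumes a: "\<alpha> \<in> Sim" and b: "\<beta> \<in> Pos" and ne: "\<beta> \<noteq> \<alpha>"
  shows "root_refl \<alpha> \<beta> \<in> Pos" "root_refl \<alpha> \<beta> \<noteq> \<alpha>"
proof -
  have aR: "\<alpha> \<in> R" using a Sim_R by auto
  have bR: "\<beta> \<in> R" using b by (simp add: Pos_iff)
  have r: "root_refl \<alpha> \<beta> \<in> R" using reflR[OF aR bR] .
  have "\<not> c \<bullet> root_refl \<alpha> \<beta> < 0" using refl_pos[OF a b] ne by blast
  then show "root_refl \<alpha> \<beta> \<in> Pos" using genR[OF r] r by (simp add: Pos_iff)
  show "root_refl \<alpha> \<beta> \<noteq> \<alpha>"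
  proof
    assume "root_refl \<alpha> \<beta> = \<alpha>"
    then have "\<beta> = root_refl \<alpha> \<alpha>" using refl_invol[OF nz[OF aR], of \<beta>] by simp
    then have "\<beta> = - \<alpha>" using refl_self[OF nz[OF aR]] by simp
    moreover have "c \<bullet> \<alpha> > 0" using a Sim_Pos Pos_iff by blast
    ultimately show False using b Pos_iff by auto
  qed
qed

end

context rs begin
lemma foldr_gen: "foldr (\<lambda>\<alpha> f. root_refl \<alpha> \<circ> f) xs g = foldr (\<lambda>\<alpha> f. root_refl \<alpha> \<circ> f) xs id \<circ> g"
  by (induction xs) (auto simp: o_assoc)

lemma wd_Nil[simp]: "wd [] = id" by (simp add: wd_def)
lemma wd_Cons[simp]: "wd (a # t) = root_refl a \<circ> wd t" by (simp add: wd_def)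
lemma wd_append: "wd (xs @ ys) = wd xs \<circ> wd ys"
  unfolding wd_def foldr_append by (rule foldr_gen)

lemma wd_W: "set ss \<subseteq> Sim \<Longrightarrow> wd ss \<in> weyl_group R"
proof (induction ss)
  case Nil
  show ?case unfolding wd_Nil by (rule weyl_group.weyl_id)
next
  case (Cons a t)
  then have "a \<in> R" "wd t \<in> weyl_group R" using Sim_R by auto
  then have "root_refl a \<circ> wd t \<in> weyl_group R" by (rule weyl_group.weyl_step)
  then show ?case unfolding wd_Cons .
qed

lemma exchange: "set ss \<subseteq> Sim \<Longrightarrow> \<alpha> \<in> Sim \<Longrightarrow> c \<bullet> wd ss \<alpha> < 0 \<Longrightarrow>
   \<exists>ss'. set ss' \<subseteq> Sim \<and> length ss = Suc (length ss') \<and> wd ss' = wd ss \<circ> root_refl \<alpha>"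
proof (induction ss)
  case Nil
  then show ?case using Sim_Pos Pos_iff by fastforce
next
  case (Cons a t)
  have aR: "\<alpha> \<in> R" using Cons Sim_R by auto
  have tW: "wd t \<in> weyl_group R" using Cons wd_W by auto
  define v where "v = wd t \<alpha>"
  have vR: "v \<in> R" using W_RI[OF tW aR] v_def by simp
  show ?case
  proof (cases "c \<bullet> v < 0")
    case True
    have tS: "set t \<subseteq> Sim" using Cons.prems by simp
    have "c \<bullet> wd t \<alpha> < 0" using True v_def by simp
    from Cons.IH[OF tS Cons.prems(2) this] obtain t' where t': "set t' \<subseteq> Sim" "length t = Suc (length t')" "wd t' = wd t \<circ> root_refl \<alpha>"
      by blast
    show ?thesis using t' Cons by (intro exI[of _ "a # t'"]) (auto simp: o_assoc)
  next
    case False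
    then have vP: "v \<in> Pos" using genR[OF vR] vR by (simp add: Pos_iff)
    have "c \<bullet> root_refl a v < 0" using Cons v_def by simp
    then have va: "v = a" using refl_pos[OF _ vP] Cons by auto
    have conj: "root_refl a \<circ> wd t = wd t \<circ> root_refl \<alpha>"
      using refl_conj[OF W_linear[OF tW] W_inner[OF tW], of \<alpha>] va v_def by simp
    have "wd (a # t) \<circ> root_refl \<alpha> = wd t \<circ> (root_refl \<alpha> \<circ> root_refl \<alpha>)"
      by (simp add: conj o_assoc)
    also have "\<dots> = wd t" using refl_comp[OF nz[OF aR]] by simp
    finally have e: "wd (a # t) \<circ> root_refl \<alpha> = wd t" .
    show ?thesis
    proof (intro exI[of _ t] conjI)
      show "set t \<subseteq> Sim" using Cons.prems by simp
      show "length (a # t) = Suc (length t)" by simp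
      show "wd t = wd (a # t) \<circ> root_refl \<alpha>" using e by (rule sym)
    qed
  qed
qed

end

context rs begin

lemma len_alt: "len w = (LEAST n. \<exists>ss. length ss = n \<and> set ss \<subseteq> Sim \<and> w = wd ss)"
  unfolding coxeter_length_def wd_def ..

lemma len_le: "set ss \<subseteq> Sim \<Longrightarrow> len (wd ss) \<le> length ss"
proof -
  assume "set ss \<subseteq> Sim"
  then have "\<exists>ss'. length ss' = length ss \<and> set ss' \<subseteq> Sim \<and> wd ss = wd ss'" by blast
  then show ?thesis unfolding len_alt by (rule Least_le)
qed

lemma len_ex: "set ss \<subseteq> Sim \<Longrightarrow> w = wd ss \<Longrightarrow> \<exists>ss'. set ss' \<subseteq> Sim \<and> length ss' = len w \<and> w = wd ss'"
proof -
  assume "set ss \<subseteq> Sim" "w = wd ss"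
  then have "\<exists>n ss. length ss = n \<and> set ss \<subseteq> Sim \<and> w = wd ss" by blast
  from LeastI_ex[OF this] show ?thesis unfolding len_alt by blast
qed

lemma wd_single: "wd [a] = root_refl a" by simp

lemma len_step_neg: assumes ss: "set ss \<subseteq> Sim" and a: "\<alpha> \<in> Sim" and n: "c \<bullet> wd ss \<alpha> < 0"
  shows "len (wd ss \<circ> root_refl \<alpha>) + 1 = len (wd ss)"
proof -
  obtain s0 where s0: "set s0 \<subseteq> Sim" "length s0 = len (wd ss)" "wd ss = wd s0"
    using len_ex[OF ss refl] by blast
  obtain s' where s': "set s' \<subseteq> Sim" "length s0 = Suc (length s')" "wd s' = wd s0 \<circ> root_refl \<alpha>"
    using exchange[OF s0(1) a] n unfolding s0(3) by blast
  have le1: "len (wd ss \<circ> root_refl \<alpha>) + 1 \<le> len (wd ss)"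
    using len_le[OF s'(1)] s' s0 by simp
  obtain s1 where s1: "set s1 \<subseteq> Sim" "length s1 = len (wd ss \<circ> root_refl \<alpha>)" "wd ss \<circ> root_refl \<alpha> = wd s1"
    using len_ex[OF s'(1), of "wd ss \<circ> root_refl \<alpha>"] s'(3) s0(3) by auto
  have "wd (s1 @ [\<alpha>]) = wd ss \<circ> root_refl \<alpha> \<circ> root_refl \<alpha>"
    unfolding wd_append wd_single s1(3) ..
  also have "\<dots> = wd ss" by (simp only: o_assoc[symmetric] refl_comp[OF nz[OF Sim_R[OF a]]] comp_id)
  finally have "len (wd ss) \<le> length (s1 @ [\<alpha>])" using len_le[of "s1 @ [\<alpha>]"] s1(1) a by simp
  then have "len (wd ss) \<le> len (wd ss \<circ> root_refl \<alpha>) + 1" using s1(2) by simp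
  with le1 show ?thesis by simp
qed

lemma len_step_pos: assumes ss: "set ss \<subseteq> Sim" and a: "\<alpha> \<in> Sim" and p: "c \<bullet> wd ss \<alpha> > 0"
  shows "len (wd ss \<circ> root_refl \<alpha>) = len (wd ss) + 1"
proof -
  have aR: "\<alpha> \<in> R" using a Sim_R by auto
  have ss2: "set (ss @ [\<alpha>]) \<subseteq> Sim" using ss a by simp
  have w2: "wd (ss @ [\<alpha>]) = wd ss \<circ> root_refl \<alpha>" unfolding wd_append wd_single ..
  have lin: "linear (wd ss)" using W_linear[OF wd_W[OF ss]] .
  have "wd (ss @ [\<alpha>]) \<alpha> = - wd ss \<alpha>"
    using w2 refl_self[OF nz[OF aR]] linear_neg[OF lin] by simp
  then have "c \<bullet> wd (ss @ [\<alpha>]) \<alpha> < 0" using p by simp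
  from len_step_neg[OF ss2 a this] have "len (wd (ss @ [\<alpha>]) \<circ> root_refl \<alpha>) + 1 = len (wd (ss @ [\<alpha>]))" .
  moreover have "wd (ss @ [\<alpha>]) \<circ> root_refl \<alpha> = wd ss"
    unfolding w2 by (simp only: o_assoc[symmetric] refl_comp[OF nz[OF aR]] comp_id)
  ultimately show ?thesis using w2 by simp
qed

lemma invs_sub: "invs w \<subseteq> Pos" by (auto simp: invs_def)
lemma fin_invs: "finite (invs w)" using finite_subset[OF invs_sub finPos] .

lemma invs_step: assumes a: "\<alpha> \<in> Sim"
  shows "invs (w \<circ> root_refl \<alpha>) - {\<alpha>} = root_refl \<alpha> ` (invs w - {\<alpha>})"
proof -
  have aR: "\<alpha> \<in> R" using a Sim_R by auto
  note inv = refl_invol[OF nz[OF aR]]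
  show ?thesis
  proof
    show "invs (w \<circ> root_refl \<alpha>) - {\<alpha>} \<subseteq> root_refl \<alpha> ` (invs w - {\<alpha>})"
    proof
      fix \<beta> assume b: "\<beta> \<in> invs (w \<circ> root_refl \<alpha>) - {\<alpha>}"
      then have bP: "\<beta> \<in> Pos" "\<beta> \<noteq> \<alpha>" "c \<bullet> w (root_refl \<alpha> \<beta>) < 0" by (auto simp: invs_def)
      have "root_refl \<alpha> \<beta> \<in> invs w - {\<alpha>}"
        using refl_pos2[OF a bP(1,2)] bP(3) by (auto simp: invs_def)
      moreover have "\<beta> = root_refl \<alpha> (root_refl \<alpha> \<beta>)" using inv by simp
      ultimately show "\<beta> \<in> root_refl \<alpha> ` (invs w - {\<alpha>})" by blast
    qed
    show "root_refl \<alpha> ` (invs w - {\<alpha>}) \<subseteq> invs (w \<circ> root_refl \<alpha>) - {\<alpha>}"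
    proof
      fix \<beta> assume "\<beta> \<in> root_refl \<alpha> ` (invs w - {\<alpha>})"
      then obtain \<gamma> where g: "\<gamma> \<in> Pos" "\<gamma> \<noteq> \<alpha>" "c \<bullet> w \<gamma> < 0" "\<beta> = root_refl \<alpha> \<gamma>"
        by (auto simp: invs_def)
      show "\<beta> \<in> invs (w \<circ> root_refl \<alpha>) - {\<alpha>}"
        using refl_pos2[OF a g(1,2)] g(3,4) inv by (auto simp: invs_def)
    qed
  qed
qed

lemma ninv_step: assumes w: "w \<in> weyl_group R" and a: "\<alpha> \<in> Sim"
  shows "c \<bullet> w \<alpha> < 0 \<Longrightarrow> ninv (w \<circ> root_refl \<alpha>) + 1 = ninv w"
    and "c \<bullet> w \<alpha> > 0 \<Longrightarrow> ninv (w \<circ> root_refl \<alpha>) = ninv w + 1"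
proof -
  have aR: "\<alpha> \<in> R" using a Sim_R by auto
  have aP: "\<alpha> \<in> Pos" using a Sim_Pos by auto
  have bj: "bij (root_refl \<alpha>)" by (rule involuntory_imp_bij) (rule refl_invol[OF nz[OF aR]])
  have injr: "inj_on (root_refl \<alpha>) X" for X
    using inj_on_subset[OF bij_is_inj[OF bj] subset_UNIV] .
  have cd: "card (invs (w \<circ> root_refl \<alpha>) - {\<alpha>}) = card (invs w - {\<alpha>})"
    using invs_step[OF a, of w] card_image[OF injr] by simp
  have wa: "w (root_refl \<alpha> \<alpha>) = - w \<alpha>" using refl_self[OF nz[OF aR]] linear_neg[OF W_linear[OF w]] by simp
  have A: "\<alpha> \<in> invs w \<longleftrightarrow> c \<bullet> w \<alpha> < 0" using aP by (simp add: invs_def)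
  have B: "\<alpha> \<in> invs (w \<circ> root_refl \<alpha>) \<longleftrightarrow> c \<bullet> w \<alpha> > 0" using aP wa by (simp add: invs_def)
  show "c \<bullet> w \<alpha> < 0 \<Longrightarrow> ninv (w \<circ> root_refl \<alpha>) + 1 = ninv w"
  proof -
    assume n: "c \<bullet> w \<alpha> < 0"
    then have "\<alpha> \<in> invs w" "\<alpha> \<notin> invs (w \<circ> root_refl \<alpha>)" using A B by auto
    then have e1: "invs (w \<circ> root_refl \<alpha>) - {\<alpha>} = invs (w \<circ> root_refl \<alpha>)" by blast
    have e2: "card (invs w - {\<alpha>}) = card (invs w) - 1" using card_Diff_singleton[OF \<open>\<alpha> \<in> invs w\<close>] .
    have e3: "card (invs w) > 0" using \<open>\<alpha> \<in> invs w\<close> fin_invs[of w] card_gt_0_iff by blast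
    show ?thesis unfolding ninv_def using cd[unfolded e1] e2 e3 by linarith
  qed
  show "c \<bullet> w \<alpha> > 0 \<Longrightarrow> ninv (w \<circ> root_refl \<alpha>) = ninv w + 1"
  proof -
    assume n: "c \<bullet> w \<alpha> > 0"
    then have "\<alpha> \<notin> invs w" "\<alpha> \<in> invs (w \<circ> root_refl \<alpha>)" using A B by auto
    then have e1: "invs w - {\<alpha>} = invs w" by blast
    have e2: "card (invs (w \<circ> root_refl \<alpha>) - {\<alpha>}) = card (invs (w \<circ> root_refl \<alpha>)) - 1"
      using card_Diff_singleton[OF \<open>\<alpha> \<in> invs (w \<circ> root_refl \<alpha>)\<close>] .
    have e3: "card (invs (w \<circ> root_refl \<alpha>)) > 0"
      using \<open>\<alpha> \<in> invs (w \<circ> root_refl \<alpha>)\<close> fin_invs[of "w \<circ> root_refl \<alpha>"] card_gt_0_iff by blast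
    show ?thesis unfolding ninv_def using cd[unfolded e1] e2 e3 by linarith
  qed
qed

lemma len_ninv: "set ss \<subseteq> Sim \<Longrightarrow> len (wd ss) = ninv (wd ss)"
proof (induction ss rule: rev_induct)
  case Nil
  have l: "len (wd []) = 0" using len_le[of "[]"] by simp
  have "invs (wd []) = {}" by (auto simp: invs_def Pos_iff)
  then have n: "ninv (wd []) = 0" by (simp only: ninv_def card.empty)
  show ?case by (simp only: l n)
next
  case (snoc a xs)
  have xs: "set xs \<subseteq> Sim" and a: "a \<in> Sim" using snoc.prems by auto
  have w2: "wd (xs @ [a]) = wd xs \<circ> root_refl a" unfolding wd_append wd_single ..
  have W: "wd xs \<in> weyl_group R" using wd_W[OF xs] .
  have "wd xs a \<in> R" using W_RI[OF W Sim_R[OF a]] .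
  then have "c \<bullet> wd xs a < 0 \<or> c \<bullet> wd xs a > 0" using genR by force
  then show ?case
  proof
    assume n: "c \<bullet> wd xs a < 0"
    show ?thesis unfolding w2 using len_step_neg[OF xs a n] ninv_step(1)[OF W a n] snoc.IH[OF xs] by linarith
  next
    assume n: "c \<bullet> wd xs a > 0"
    show ?thesis unfolding w2 using len_step_pos[OF xs a n] ninv_step(2)[OF W a n] snoc.IH[OF xs] by linarith
  qed
qed

end

context rs begin

lemma refl_word: "\<beta> \<in> Pos \<Longrightarrow> \<exists>ss. set ss \<subseteq> Sim \<and> root_refl \<beta> = wd ss"
proof (induction \<beta> rule: pos_induct)
  case (step \<beta>)
  show ?case
  proof (cases "\<beta> \<in> Sim")
    case True
    show ?thesis
    proof (intro exI[of _ "[\<beta>]"] conjI)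
      show "set [\<beta>] \<subseteq> Sim" using True by simp
      show "root_refl \<beta> = wd [\<beta>]" by (simp only: wd_single)
    qed
  next
    case False
    have bR: "\<beta> \<in> R" using step(1) by (simp add: Pos_iff)
    have bb: "\<beta> \<bullet> \<beta> > 0" using nz[OF bR] by simp
    obtain \<alpha> where a: "\<alpha> \<in> Sim" "\<beta> \<bullet> \<alpha> > 0"
    proof -
      { assume "\<forall>\<alpha>\<in>Sim. \<beta> \<bullet> \<alpha> \<le> 0"
        then have "\<beta> \<bullet> \<beta> \<le> 0" using nnsum_nonpos[OF Pos_nnsum[OF step(1)], of \<beta>] by blast
        with bb have False by linarith }
      then show ?thesis using that by force
    qed
    have aR: "\<alpha> \<in> R" using a Sim_R by auto
    have ca: "c \<bullet> \<alpha> > 0" using a Sim_Pos Pos_iff by blast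
    have aa: "\<alpha> \<bullet> \<alpha> > 0" using nz[OF aR] by simp
    have ne: "\<beta> \<noteq> \<alpha>" using False a by auto
    define g where "g = root_refl \<alpha> \<beta>"
    have gP: "g \<in> Pos" using refl_pos2(1)[OF a(1) step(1) ne] g_def by simp
    define k where "k = 2 * (\<beta> \<bullet> \<alpha>) / (\<alpha> \<bullet> \<alpha>)"
    have k0: "k > 0" using a(2) aa by (simp add: k_def)
    have "g = \<beta> - k *\<^sub>R \<alpha>" by (simp add: g_def root_refl_def k_def)
    then have "c \<bullet> g = c \<bullet> \<beta> - k * (c \<bullet> \<alpha>)" by (simp add: inner_diff_right)
    moreover have "k * (c \<bullet> \<alpha>) > 0" using k0 ca by simp
    ultimately have "c \<bullet> g < c \<bullet> \<beta>" by linarith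
    from step(2)[OF gP this] obtain ts where ts: "set ts \<subseteq> Sim" "root_refl g = wd ts" by blast
    have conj: "root_refl g \<circ> root_refl \<alpha> = root_refl \<alpha> \<circ> root_refl \<beta>"
      unfolding g_def by (rule refl_conj[OF refl_linear refl_inner[OF nz[OF aR]]])
    have "root_refl \<beta> = root_refl \<alpha> \<circ> (root_refl \<alpha> \<circ> root_refl \<beta>)"
      by (simp only: o_assoc refl_comp[OF nz[OF aR]] id_comp)
    also have "\<dots> = root_refl \<alpha> \<circ> (root_refl g \<circ> root_refl \<alpha>)" by (simp only: conj)
    also have "\<dots> = wd ([\<alpha>] @ ts @ [\<alpha>])" by (simp only: wd_append wd_single ts(2))
    finally show ?thesis using ts(1) a(1) by (intro exI[of _ "[\<alpha>] @ ts @ [\<alpha>]"]) simp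
  qed
qed

lemma W_word: "w \<in> weyl_group R \<Longrightarrow> \<exists>ss. set ss \<subseteq> Sim \<and> w = wd ss"
proof (induction w rule: weyl_group.induct)
  case weyl_id
  show ?case by (rule exI[of _ "[]"]) simp
next
  case (weyl_step \<alpha> w)
  obtain ss where ss: "set ss \<subseteq> Sim" "w = wd ss" using weyl_step by blast
  obtain ts where ts: "set ts \<subseteq> Sim" "root_refl \<alpha> = wd ts"
  proof (cases "\<alpha> \<in> Pos")
    case True then show ?thesis using refl_word that by blast
  next
    case False
    then have "- \<alpha> \<in> Pos" using R_cases weyl_step by blast
    then show ?thesis using refl_word that refl_neg by metis
  qed
  have "root_refl \<alpha> \<circ> w = wd (ts @ ss)" by (simp only: wd_append ts(2) ss(2))
  then show ?case using ss ts by (intro exI[of _ "ts @ ss"]) simp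
qed

lemma W_len: "w \<in> weyl_group R \<Longrightarrow> len w = ninv w"
  using W_word len_ninv by blast

lemma W_comp: "u \<in> weyl_group R \<Longrightarrow> v \<in> weyl_group R \<Longrightarrow> u \<circ> v \<in> weyl_group R"
proof -
  assume "u \<in> weyl_group R" "v \<in> weyl_group R"
  then obtain us vs where "set us \<subseteq> Sim" "u = wd us" "set vs \<subseteq> Sim" "v = wd vs" using W_word by metis
  then have "u \<circ> v = wd (us @ vs)" "set (us @ vs) \<subseteq> Sim" by (simp_all only: wd_append, simp)
  then show ?thesis using wd_W by simp
qed

lemma wd_rev: "set ss \<subseteq> Sim \<Longrightarrow> wd (rev ss) \<circ> wd ss = id"
proof (induction ss)
  case Nil then show ?case by simp
next
  case (Cons a t)
  then have a: "a \<in> Sim" and t: "set t \<subseteq> Sim" by auto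
  have "wd (rev (a # t)) \<circ> wd (a # t) = wd (rev t) \<circ> (root_refl a \<circ> root_refl a) \<circ> wd t"
    by (simp only: rev.simps wd_append wd_Cons wd_Nil comp_id o_assoc)
  also have "\<dots> = wd (rev t) \<circ> wd t" by (simp only: refl_comp[OF nz[OF Sim_R[OF a]]] comp_id)
  also have "\<dots> = id" using Cons.IH[OF t] .
  finally show ?case .
qed

lemma W_inv: assumes "w \<in> weyl_group R"
  shows "inv w \<in> weyl_group R" "inv w \<circ> w = id" "w \<circ> inv w = id"
proof -
  obtain ss where ss: "set ss \<subseteq> Sim" "w = wd ss" using W_word assms by blast
  have r: "set (rev ss) \<subseteq> Sim" using ss by simp
  have "inv w = wd (rev ss)"
    using inv_unique_comp[of w "wd (rev ss)"] wd_rev[OF ss(1)] wd_rev[OF r] ss(2) by simp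
  then show "inv w \<in> weyl_group R" using wd_W[OF r] by simp
  show "inv w \<circ> w = id" using bij_is_inj[OF W_bij[OF assms]] by simp
  show "w \<circ> inv w = id" using bij_is_surj[OF W_bij[OF assms]] surj_iff by blast
qed

lemma len_inv_le: assumes "w \<in> weyl_group R" shows "len (inv w) \<le> len w"
proof -
  obtain ss0 where "set ss0 \<subseteq> Sim" "w = wd ss0" using W_word assms by blast
  then obtain ss where ss: "set ss \<subseteq> Sim" "length ss = len w" "w = wd ss" using len_ex by blast
  have r: "set (rev ss) \<subseteq> Sim" using ss by simp
  have "inv w = wd (rev ss)"
    using inv_unique_comp[of w "wd (rev ss)"] wd_rev[OF ss(1)] wd_rev[OF r] ss(3) by simp
  then show ?thesis using len_le[OF r] ss(2) by simp
qed

lemma len_inv: assumes "w \<in> weyl_group R" shows "len (inv w) = len w"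
proof -
  have "len (inv (inv w)) \<le> len (inv w)" using len_inv_le[OF W_inv(1)[OF assms]] .
  moreover have "inv (inv w) = w" using inv_inv_eq[OF W_bij[OF assms]] .
  ultimately show ?thesis using len_inv_le[OF assms] by simp
qed

lemma len0: assumes "w \<in> weyl_group R" "len w = 0" shows "w = id"
proof -
  obtain ss0 where "set ss0 \<subseteq> Sim" "w = wd ss0" using W_word assms by blast
  then obtain ss where ss: "set ss \<subseteq> Sim" "length ss = len w" "w = wd ss" using len_ex by blast
  then have "ss = []" using assms(2) by simp
  then show ?thesis using ss(3) by simp
qed

lemma len_id: "len id = 0" using len_le[of "[]"] by simp

lemma ninv_le: "ninv w \<le> card Pos" unfolding ninv_def using card_mono[OF finPos invs_sub] .

end

context rs begin

lemma max_full: assumes w: "w \<in> weyl_group R" and mx: "\<forall>u\<in>weyl_group R. len u \<le> len w"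
  and b: "\<beta> \<in> Pos" shows "c \<bullet> w \<beta> < 0"
proof -
  obtain ss where ss: "set ss \<subseteq> Sim" "w = wd ss" using W_word w by blast
  have simn: "c \<bullet> w \<alpha> < 0" if a: "\<alpha> \<in> Sim" for \<alpha>
  proof (rule ccontr)
    assume "\<not> c \<bullet> w \<alpha> < 0"
    moreover have "w \<alpha> \<in> R" using W_RI[OF w Sim_R[OF a]] .
    ultimately have p: "c \<bullet> wd ss \<alpha> > 0" using genR ss(2) by force
    have "len (w \<circ> root_refl \<alpha>) = len w + 1" using len_step_pos[OF ss(1) a p] ss(2) by simp
    moreover have "w \<circ> root_refl \<alpha> \<in> weyl_group R"
      using W_comp[OF w weyl_group.weyl_step[OF Sim_R[OF a] weyl_group.weyl_id]] by simp
    ultimately show False using mx by fastforce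
  qed
  have "\<beta> = 0 \<or> c \<bullet> w \<beta> < 0" using nnsum_neg_map[OF Pos_nnsum[OF b] W_linear[OF w]] simn by blast
  moreover have "\<beta> \<noteq> 0" using b nz by (auto simp: Pos_iff)
  ultimately show ?thesis by blast
qed

lemma full_comp: assumes w0: "w0 \<in> weyl_group R" and full: "\<And>\<beta>. \<beta> \<in> Pos \<Longrightarrow> c \<bullet> w0 \<beta> < 0"
  and u: "u \<in> weyl_group R"
  shows "ninv (u \<circ> w0) + ninv u = card Pos"
proof -
  define f where "f = (\<lambda>\<beta>. - w0 \<beta>)"
  have fP: "f \<beta> \<in> Pos" if "\<beta> \<in> Pos" for \<beta>
    using that full[OF that] negR[OF W_RI[OF w0]] by (auto simp: f_def Pos_iff)
  have inj: "inj_on f Pos"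
    using bij_is_inj[OF W_bij[OF w0]] by (auto simp: f_def inj_on_def inj_def)
  have fPos: "f ` Pos = Pos" using endo_inj_surj[OF finPos _ inj] fP by blast
  have ulin: "linear u" using W_linear[OF u] .
  have img: "f ` invs (u \<circ> w0) = {\<gamma>\<in>Pos. c \<bullet> u \<gamma> > 0}"
  proof
    show "f ` invs (u \<circ> w0) \<subseteq> {\<gamma>\<in>Pos. c \<bullet> u \<gamma> > 0}"
    proof
      fix \<gamma> assume "\<gamma> \<in> f ` invs (u \<circ> w0)"
      then obtain \<beta> where bt: "\<beta> \<in> Pos" "c \<bullet> u (w0 \<beta>) < 0" "\<gamma> = f \<beta>" by (auto simp: invs_def)
      have "u \<gamma> = - u (w0 \<beta>)" using bt(3) linear_neg[OF ulin] by (simp add: f_def)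
      then show "\<gamma> \<in> {\<gamma>\<in>Pos. c \<bullet> u \<gamma> > 0}" using bt fP by simp
    qed
    show "{\<gamma>\<in>Pos. c \<bullet> u \<gamma> > 0} \<subseteq> f ` invs (u \<circ> w0)"
    proof
      fix \<gamma> assume g: "\<gamma> \<in> {\<gamma>\<in>Pos. c \<bullet> u \<gamma> > 0}"
      then obtain \<beta> where bt: "\<beta> \<in> Pos" "\<gamma> = f \<beta>" using fPos by blast
      have "u (w0 \<beta>) = - u \<gamma>" using bt(2) linear_neg[OF ulin] by (simp add: f_def)
      then have "\<beta> \<in> invs (u \<circ> w0)" using bt g by (simp add: invs_def)
      then show "\<gamma> \<in> f ` invs (u \<circ> w0)" using bt by blast
    qed
  qed
  have c1: "card (invs (u \<circ> w0)) = card {\<gamma>\<in>Pos. c \<bullet> u \<gamma> > 0}"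
    using card_image[OF inj_on_subset[OF inj invs_sub[of "u \<circ> w0"]]] unfolding img by (rule sym)
  have G: "{\<gamma>\<in>Pos. c \<bullet> u \<gamma> > 0} = Pos - invs u"
  proof -
    have "c \<bullet> u \<gamma> \<noteq> 0" if "\<gamma> \<in> Pos" for \<gamma> using genR[OF W_RI[OF u]] that by (simp add: Pos_iff)
    then show ?thesis by (auto simp: invs_def) (meson linorder_neqE_linordered_idom)
  qed
  have "card (Pos - invs u) = card Pos - card (invs u)" using card_Diff_subset[OF fin_invs invs_sub] .
  then show ?thesis using c1 G ninv_le[of u] unfolding ninv_def by simp
qed

lemma longest_props:
  shows "longest_element R c \<in> weyl_group R"
    and "\<And>u. u \<in> weyl_group R \<Longrightarrow> len u \<le> len (longest_element R c)"
    and "\<And>w. w \<in> weyl_group R \<Longrightarrow> len w = len (longest_element R c) \<Longrightarrow> w = longest_element R c"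
    and "\<And>u. u \<in> weyl_group R \<Longrightarrow> len (u \<circ> longest_element R c) + len u = len (longest_element R c)"
proof -
  let ?P = "\<lambda>w. w \<in> weyl_group R \<and> (\<forall>u\<in>weyl_group R. len u \<le> len w)"
  have fin: "finite (len ` weyl_group R)"
    by (rule finite_subset[of _ "{0..card Pos}"]) (auto simp: W_len ninv_le)
  have ne: "len ` weyl_group R \<noteq> {}" using weyl_group.weyl_id by blast
  obtain wm where wm: "wm \<in> weyl_group R" "len wm = Max (len ` weyl_group R)"
    using Max_in[OF fin ne] by (metis imageE)
  have Pwm: "?P wm" using wm fin by auto
  have full_of: "\<And>w \<beta>. ?P w \<Longrightarrow> \<beta> \<in> Pos \<Longrightarrow> c \<bullet> w \<beta> < 0" using max_full by blast
  have uniq: "w1 = w2" if p1: "?P w1" and p2: "?P w2" for w1 w2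
  proof -
    have w1: "w1 \<in> weyl_group R" and w2: "w2 \<in> weyl_group R" using p1 p2 by auto
    define u where "u = w1 \<circ> inv w2"
    have uW: "u \<in> weyl_group R" using W_comp[OF w1 W_inv(1)[OF w2]] u_def by simp
    have uw: "u \<circ> w2 = w1" unfolding u_def by (simp only: o_assoc[symmetric] W_inv(2)[OF w2] comp_id)
    have fc: "ninv (u \<circ> w2) + ninv u = card Pos" using full_comp[OF w2 full_of[OF p2] uW] .
    have "invs w1 = Pos" using full_of[OF p1] by (auto simp: invs_def)
    then have "ninv w1 = card Pos" by (simp add: ninv_def)
    then have "ninv u = 0" using fc uw by simp
    then have "u = id" using len0[OF uW] W_len[OF uW] by simp
    then show ?thesis using uw by simp
  qed
  have eq: "longest_element R c = wm"
    unfolding longest_element_def using Pwm uniq by (intro the_equality) blast+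
  show "longest_element R c \<in> weyl_group R" using eq wm by simp
  show "\<And>u. u \<in> weyl_group R \<Longrightarrow> len u \<le> len (longest_element R c)" using eq Pwm by simp
  show "\<And>w. w \<in> weyl_group R \<Longrightarrow> len w = len (longest_element R c) \<Longrightarrow> w = longest_element R c"
  proof -
    fix w assume w: "w \<in> weyl_group R" "len w = len (longest_element R c)"
    then have "?P w" using eq Pwm by simp
    then show "w = longest_element R c" using uniq Pwm eq by simp
  qed
  show "\<And>u. u \<in> weyl_group R \<Longrightarrow> len (u \<circ> longest_element R c) + len u = len (longest_element R c)"
  proof -
    fix u assume u: "u \<in> weyl_group R"
    have "invs wm = Pos" using full_of[OF Pwm] by (auto simp: invs_def)
    then have "ninv wm = card Pos" by (simp add: ninv_def)
    then show "len (u \<circ> longest_element R c) + len u = len (longest_element R c)"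
      using full_comp[OF wm(1) full_of[OF Pwm] u] W_len[OF u] W_len[OF W_comp[OF u wm(1)]] W_len[OF wm(1)] eq
      by simp
  qed
qed

end


theorem proposition6p2:
  fixes R :: "'a::euclidean_space set" and c :: 'a
    and X Y :: "('a \<Rightarrow> 'a) set" and x0 y0 :: "'a \<Rightarrow> 'a"
  assumes "crystallographic_root_system R"
    and "generic_vector R c"
    and "splitting R c X Y"
    and "x0 \<in> X" and "\<forall>x\<in>X. left_weak_le R c x x0"
    and "y0 \<in> Y" and "\<forall>y\<in>Y. right_weak_le R c y y0"
  shows "let w0 = longest_element R c;
             \<phi> = (\<lambda>u. u \<circ> inv x0);
             \<psi> = (\<lambda>u. x0 \<circ> u \<circ> w0)
         in x0 \<circ> y0 = w0
          \<and> (\<forall>u. \<psi> u = w0 \<circ> inv y0 \<circ> u \<circ> w0)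
          \<and> splitting R c (\<phi> ` X) (\<psi> ` Y)
          \<and> inv x0 \<in> \<phi> ` X \<and> (\<forall>x\<in>\<phi> ` X. left_weak_le R c x (inv x0))
          \<and> x0 \<circ> w0 \<in> \<psi> ` Y \<and> (\<forall>y\<in>\<psi> ` Y. right_weak_le R c y (x0 \<circ> w0))
          \<and> x0 \<circ> w0 = w0 \<circ> inv y0 \<circ> w0"
proof -
  interpret rs R c using assms(1,2) by unfold_locales
  define w0 where "w0 = longest_element R c"
  let ?W = "weyl_group R"
  let ?F = "\<lambda>(x::'a\<Rightarrow>'a, y::'a\<Rightarrow>'a). x \<circ> y"
  have w0W: "w0 \<in> ?W" using longest_props(1) w0_def by simp
  have lmax: "\<And>u. u \<in> ?W \<Longrightarrow> len u \<le> len w0" using longest_props(2) w0_def by simp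
  have uniq: "\<And>w. w \<in> ?W \<Longrightarrow> len w = len w0 \<Longrightarrow> w = w0" using longest_props(3) w0_def by simp
  have lcomp: "\<And>u. u \<in> ?W \<Longrightarrow> len (u \<circ> w0) + len u = len w0" using longest_props(4) w0_def by simp
  have XW: "X \<subseteq> ?W" and YW: "Y \<subseteq> ?W" and bj: "bij_betw ?F (X \<times> Y) ?W"
    and add: "\<And>x y. x \<in> X \<Longrightarrow> y \<in> Y \<Longrightarrow> len (x \<circ> y) = len x + len y"
    using assms(3) unfolding splitting_def by auto
  have x0W: "x0 \<in> ?W" and y0W: "y0 \<in> ?W" using assms XW YW by auto
  have cancel1: "inv w (w v) = v" if "w \<in> ?W" for w v
    using inv_f_f[OF bij_is_inj[OF W_bij[OF that]]] .
  have cancel2: "w (inv w v) = v" if "w \<in> ?W" for w v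
    using surj_f_inv_f[OF bij_is_surj[OF W_bij[OF that]]] .
  have F_img: "?F ` (X \<times> Y) = ?W" using bj by (simp add: bij_betw_def)
  have F_inj: "inj_on ?F (X \<times> Y)" using bj by (simp add: bij_betw_def)
  have decomp: "\<exists>x\<in>X. \<exists>y\<in>Y. w = x \<circ> y" if "w \<in> ?W" for w
  proof -
    have "w \<in> ?F ` (X \<times> Y)" using F_img that by simp
    then obtain p where p: "p \<in> X \<times> Y" "w = ?F p" by blast
    obtain x y where "p = (x, y)" by (cases p)
    then show ?thesis using p by auto
  qed
  have lx: "\<And>x. x \<in> X \<Longrightarrow> \<exists>z\<in>?W. x0 = z \<circ> x \<and> len x0 = len z + len x"
    using assms(5) unfolding left_weak_le_def by blast
  have ly: "\<And>y. y \<in> Y \<Longrightarrow> \<exists>z\<in>?W. y0 = y \<circ> z \<and> len y0 = len y + len z"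
    using assms(7) unfolding right_weak_le_def by blast
  have w0w0: "w0 \<circ> w0 = id"
  proof -
    have "len (w0 \<circ> w0) = 0" using lcomp[OF w0W] by simp
    then show ?thesis using len0[OF W_comp[OF w0W w0W]] by simp
  qed
  have w0w0p: "w0 (w0 v) = v" for v using fun_cong[OF w0w0, of v] by simp
  have invw0: "inv w0 = w0" using inv_unique_comp[OF w0w0 w0w0] .
  have p1: "x0 \<circ> y0 = w0"
  proof -
    obtain x y where xy: "x \<in> X" "y \<in> Y" "w0 = x \<circ> y" using decomp[OF w0W] by blast
    have "len x \<le> len x0" using lx[OF xy(1)] by auto
    moreover have "len y \<le> len y0" using ly[OF xy(2)] by auto
    moreover have "len w0 = len x + len y" using add[OF xy(1,2)] xy(3) by simp
    moreover have "len (x0 \<circ> y0) = len x0 + len y0" using add assms(4,6) by simp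
    moreover have "len (x0 \<circ> y0) \<le> len w0" using lmax[OF W_comp[OF x0W y0W]] .
    ultimately have "len (x0 \<circ> y0) = len w0" by linarith
    then show ?thesis using uniq[OF W_comp[OF x0W y0W]] by simp
  qed
  have x0eq: "x0 = w0 \<circ> inv y0"
  proof
    fix v
    have "x0 v = x0 (y0 (inv y0 v))" using cancel2[OF y0W] by simp
    also have "\<dots> = w0 (inv y0 v)" using fun_cong[OF p1, of "inv y0 v"] by simp
    finally show "x0 v = (w0 \<circ> inv y0) v" by simp
  qed
  have p2: "\<forall>u. x0 \<circ> u \<circ> w0 = w0 \<circ> inv y0 \<circ> u \<circ> w0" using x0eq by simp
  have p8: "x0 \<circ> w0 = w0 \<circ> inv y0 \<circ> w0" using x0eq by simp
  have idXY: "id \<in> X \<and> id \<in> Y"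
  proof -
    have idW: "id \<in> ?W" by (rule weyl_group.weyl_id)
    obtain x y where xy: "x \<in> X" "y \<in> Y" "id = x \<circ> y" using decomp[OF idW] by blast
    have "len x + len y = 0" using add[OF xy(1,2)] xy(3) len_id by simp
    then have "x = id" "y = id" using len0 xy XW YW by auto
    then show ?thesis using xy by simp
  qed
  have lenXle: "\<And>x. x \<in> X \<Longrightarrow> len x \<le> len x0" using lx by fastforce
  have lenphi: "\<And>x. x \<in> X \<Longrightarrow> len (x \<circ> inv x0) + len x = len x0"
  proof -
    fix x assume x: "x \<in> X"
    obtain z where z: "z \<in> ?W" "x0 = z \<circ> x" "len x0 = len z + len x" using lx[OF x] by blast
    have xW: "x \<in> ?W" using x XW by auto
    have "x \<circ> inv x0 = inv z"
    proof (rule inv_unique_comp[symmetric])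
      show "z \<circ> (x \<circ> inv x0) = id"
        by (rule ext) (simp add: z(2)[symmetric] cancel2[OF x0W] flip: comp_assoc)
      show "x \<circ> inv x0 \<circ> z = id"
      proof
        fix v
        have "z v = x0 (inv x (v))" using z(2) cancel2[OF xW, of v] by simp
        then show "(x \<circ> inv x0 \<circ> z) v = id v" using cancel1[OF x0W] cancel2[OF xW] by simp
      qed
    qed
    then show "len (x \<circ> inv x0) + len x = len x0" using len_inv[OF z(1)] z(3) by simp
  qed
  have lenpsi: "len (x0 \<circ> y \<circ> w0) + len x0 + len y = len w0" if y: "y \<in> Y" for y
  proof -
    have x0yW: "x0 \<circ> y \<in> ?W" using W_comp[OF x0W] y YW by auto
    show ?thesis using lcomp[OF x0yW] add[OF assms(4) y] by linarith
  qed
  have key: "\<And>x y. (x \<circ> inv x0) \<circ> (x0 \<circ> y \<circ> w0) = x \<circ> y \<circ> w0"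
    using cancel1[OF x0W] by (simp add: fun_eq_iff)
  have phiW: "(\<lambda>u. u \<circ> inv x0) ` X \<subseteq> ?W"
  proof
    fix a assume "a \<in> (\<lambda>u. u \<circ> inv x0) ` X"
    then obtain x where "x \<in> X" "a = x \<circ> inv x0" by blast
    then show "a \<in> ?W" using W_comp[OF _ W_inv(1)[OF x0W], of x] XW by auto
  qed
  have psiW: "(\<lambda>u. x0 \<circ> u \<circ> w0) ` Y \<subseteq> ?W"
  proof
    fix a assume "a \<in> (\<lambda>u. x0 \<circ> u \<circ> w0) ` Y"
    then obtain y where "y \<in> Y" "a = x0 \<circ> y \<circ> w0" by blast
    then show "a \<in> ?W" using W_comp[OF W_comp[OF x0W, of y] w0W] YW by auto
  qed
  have binj: "inj_on ?F ((\<lambda>u. u \<circ> inv x0) ` X \<times> (\<lambda>u. x0 \<circ> u \<circ> w0) ` Y)"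
  proof (rule inj_onI)
    fix p q assume p: "p \<in> (\<lambda>u. u \<circ> inv x0) ` X \<times> (\<lambda>u. x0 \<circ> u \<circ> w0) ` Y"
      and q: "q \<in> (\<lambda>u. u \<circ> inv x0) ` X \<times> (\<lambda>u. x0 \<circ> u \<circ> w0) ` Y" and e: "?F p = ?F q"
    obtain x y where xy: "x \<in> X" "y \<in> Y" "p = (x \<circ> inv x0, x0 \<circ> y \<circ> w0)" using p by blast
    obtain x' y' where xy': "x' \<in> X" "y' \<in> Y" "q = (x' \<circ> inv x0, x0 \<circ> y' \<circ> w0)" using q by blast
    have e': "x \<circ> inv x0 \<circ> (x0 \<circ> y \<circ> w0) = x' \<circ> inv x0 \<circ> (x0 \<circ> y' \<circ> w0)"
      using e xy(3) xy'(3) by simp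
    have "x \<circ> y \<circ> w0 = x' \<circ> y' \<circ> w0" using e' unfolding key .
    then have "x \<circ> y \<circ> w0 \<circ> w0 = x' \<circ> y' \<circ> w0 \<circ> w0" by simp
    then have "x \<circ> y = x' \<circ> y'" by (simp only: o_assoc[symmetric] w0w0 comp_id)
    then have "?F (x, y) = ?F (x', y')" by simp
    then have "(x, y) = (x', y')" using xy xy' by (intro inj_onD[OF F_inj]) auto
    then show "p = q" using xy xy' by simp
  qed
  have bimg: "?F ` ((\<lambda>u. u \<circ> inv x0) ` X \<times> (\<lambda>u. x0 \<circ> u \<circ> w0) ` Y) = ?W"
  proof
    show "?F ` ((\<lambda>u. u \<circ> inv x0) ` X \<times> (\<lambda>u. x0 \<circ> u \<circ> w0) ` Y) \<subseteq> ?W"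
    proof
      fix w assume "w \<in> ?F ` ((\<lambda>u. u \<circ> inv x0) ` X \<times> (\<lambda>u. x0 \<circ> u \<circ> w0) ` Y)"
      then obtain p where p: "p \<in> (\<lambda>u. u \<circ> inv x0) ` X \<times> (\<lambda>u. x0 \<circ> u \<circ> w0) ` Y" "w = ?F p"
        by (rule imageE)
      obtain a b where pab: "p = (a, b)" by (cases p)
      have ab: "a \<in> (\<lambda>u. u \<circ> inv x0) ` X" "b \<in> (\<lambda>u. x0 \<circ> u \<circ> w0) ` Y" "w = a \<circ> b"
        using p pab by auto
      show "w \<in> ?W" unfolding ab(3) using W_comp[OF subsetD[OF phiW ab(1)] subsetD[OF psiW ab(2)]] .
    qed
    show "?W \<subseteq> ?F ` ((\<lambda>u. u \<circ> inv x0) ` X \<times> (\<lambda>u. x0 \<circ> u \<circ> w0) ` Y)"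
    proof
      fix w assume w: "w \<in> ?W"
      obtain x y where xy: "x \<in> X" "y \<in> Y" "w \<circ> w0 = x \<circ> y" using decomp[OF W_comp[OF w w0W]] by blast
      have "w = w \<circ> w0 \<circ> w0" by (simp only: o_assoc[symmetric] w0w0 comp_id)
      also have "\<dots> = ?F (x \<circ> inv x0, x0 \<circ> y \<circ> w0)" by (simp only: xy(3) key prod.case)
      finally show "w \<in> ?F ` ((\<lambda>u. u \<circ> inv x0) ` X \<times> (\<lambda>u. x0 \<circ> u \<circ> w0) ` Y)"
        using xy by blast
    qed
  qed
  have blen: "\<forall>a\<in>(\<lambda>u. u \<circ> inv x0) ` X. \<forall>b\<in>(\<lambda>u. x0 \<circ> u \<circ> w0) ` Y. len (a \<circ> b) = len a + len b"
  proof (intro ballI)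
    fix a b assume a: "a \<in> (\<lambda>u. u \<circ> inv x0) ` X" and b: "b \<in> (\<lambda>u. x0 \<circ> u \<circ> w0) ` Y"
    obtain x where x: "x \<in> X" "a = x \<circ> inv x0" using a by blast
    obtain y where y: "y \<in> Y" "b = x0 \<circ> y \<circ> w0" using b by blast
    have "a \<circ> b = x \<circ> y \<circ> w0" using x y key by simp
    then have "len (a \<circ> b) + len (x \<circ> y) = len w0"
      using lcomp[OF W_comp[OF subsetD[OF XW x(1)] subsetD[OF YW y(1)]]] by simp
    then have "len (a \<circ> b) + len x + len y = len w0" using add[OF x(1) y(1)] by simp
    moreover have "len a + len x = len x0" using lenphi[OF x(1)] x(2) by simp
    moreover have "len b + len x0 + len y = len w0" using lenpsi[OF y(1)] y(2) by simp
    ultimately show "len (a \<circ> b) = len a + len b" by linarith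
  qed
  have p3: "splitting R c ((\<lambda>u. u \<circ> inv x0) ` X) ((\<lambda>u. x0 \<circ> u \<circ> w0) ` Y)"
    unfolding splitting_def bij_betw_def using phiW psiW binj bimg blen by (intro conjI) (assumption+)
  have p4: "inv x0 \<in> (\<lambda>u. u \<circ> inv x0) ` X"
    by (rule image_eqI[of _ _ id]) (simp_all add: idXY)
  have p5: "\<forall>a\<in>(\<lambda>u. u \<circ> inv x0) ` X. left_weak_le R c a (inv x0)"
  proof
    fix a assume a: "a \<in> (\<lambda>u. u \<circ> inv x0) ` X"
    obtain x where x: "x \<in> X" "a = x \<circ> inv x0" using a by blast
    have xW: "x \<in> ?W" using x XW by auto
    have e: "inv x0 = inv x \<circ> a" using x(2) cancel1[OF xW] by (simp add: fun_eq_iff)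
    have "len (inv x0) = len (inv x) + len a"
      using len_inv[OF x0W] len_inv[OF xW] lenphi[OF x(1)] x(2) by simp
    then show "left_weak_le R c a (inv x0)" unfolding left_weak_le_def
      using e W_inv(1)[OF xW] by (intro bexI[of _ "inv x"] conjI)
  qed
  have p6: "x0 \<circ> w0 \<in> (\<lambda>u. x0 \<circ> u \<circ> w0) ` Y"
    by (rule image_eqI[of _ _ id]) (simp_all add: idXY)
  have p7: "\<forall>b\<in>(\<lambda>u. x0 \<circ> u \<circ> w0) ` Y. right_weak_le R c b (x0 \<circ> w0)"
  proof
    fix b assume b: "b \<in> (\<lambda>u. x0 \<circ> u \<circ> w0) ` Y"
    obtain y where y: "y \<in> Y" "b = x0 \<circ> y \<circ> w0" using b by blast
    have yW: "y \<in> ?W" using y YW by auto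
    define z where "z = w0 \<circ> inv y \<circ> w0"
    have zW: "z \<in> ?W" unfolding z_def using W_comp w0W W_inv(1)[OF yW] by blast
    have e: "x0 \<circ> w0 = b \<circ> z" unfolding z_def y(2) using w0w0p cancel2[OF yW] by (simp add: fun_eq_iff)
    have lz: "len z = len y"
    proof -
      have wy: "w0 \<circ> inv y \<in> ?W" using W_comp w0W W_inv(1)[OF yW] by blast
      have "len z + len (w0 \<circ> inv y) = len w0" unfolding z_def using lcomp[OF wy] .
      moreover have "len (w0 \<circ> inv y) = len (y \<circ> w0)"
      proof -
        have "inv (w0 \<circ> inv y) = y \<circ> w0"
        using o_inv_distrib[OF W_bij[OF w0W] W_bij[OF W_inv(1)[OF yW]]] invw0 inv_inv_eq[OF W_bij[OF yW]]
          by simp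
        then show ?thesis using len_inv[OF wy] by simp
      qed
      moreover have "len (y \<circ> w0) + len y = len w0" using lcomp[OF yW] .
      ultimately show ?thesis by linarith
    qed
    have "len (x0 \<circ> w0) = len b + len z"
      using lcomp[OF x0W] lenpsi[OF y(1)] lz unfolding y(2) by linarith
    then show "right_weak_le R c b (x0 \<circ> w0)" unfolding right_weak_le_def
      using e zW by (intro bexI[of _ z] conjI)
  qed
  show ?thesis unfolding Let_def w0_def[symmetric]
    using p1 p2 p3 p4 p5 p6 p7 p8 by (intro conjI) (assumption+)
qed

end
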